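(* Let $X=(\mathbb{C}^n,\|\cdot\|)$ be an $n$-dimensional complex CL-space with an absolute norm. Then $(a_1,\dots,a_n)\in X$ is a complex extreme point of $B_X$ if and only if $(|a_1|,\dots,|a_n|)$ is a convex combination of extreme points of $B_X$ all of whose coordinates are nonnegative real numbers. In short, $\mathbb{R}_+^n\cap\mathrm{ext}_{\mathbb{C}}B_X=\mathrm{co}(\mathbb{R}_+^n\cap\mathrm{ext}\,B_X)$.
   Context: A norm on $\mathbb{C}^n$ is absolute if $\|(a_1,\dots,a_n)\|=\|(|a_1|,\dots,|a_n|)\|$ for all scalars and $\|e_j\|=1$ for the canonical basis vectors. A Banach space is a CL-space if its unit ball is the absolutely convex hull of every maximal convex subset of its unit sphere; in finite dimensions, equivalently, $|x^*(x)|=1$ for every extreme point $x^*$ of $B_{X^*}$ and every extreme point $x$ of $B_X$. $\mathrm{ext}\,B_X$ is the set of extreme points of $B_X$ ($x\in B_X$ with $y+z=2x$, $y,z\in B_X$ implying $x=y=z$). $x\in B_X$ is a complex extreme point of $B_X$ if $\sup_{0\le\theta\le2\pi}\|x+e^{i\theta}y\|\le1$ for some $y\in X$ implies $y=0$; $\mathrm{ext}_{\mathbb{C}}B_X$ is the set of complex extreme points. $\mathbb{R}_+^n$ denotes vectors with nonnegative real coordinates and $\mathrm{co}$ the convex hull. *)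

theory Defs
  imports "HOL-Analysis.Analysis"
begin

definition is_cnorm :: "(complex ^ 'n \<Rightarrow> real) \<Rightarrow> bool" where
  "is_cnorm N \<longleftrightarrow>
     (\<forall>x. N x = 0 \<longleftrightarrow> x = 0) \<and>
     (\<forall>c x. N (c *s x) = cmod c * N x) \<and>
     (\<forall>x y. N (x + y) \<le> N x + N y)"

definition cabs_vec :: "complex ^ 'n \<Rightarrow> complex ^ 'n" where
  "cabs_vec a = (\<chi> i. complex_of_real (cmod (a $ i)))"

definition is_absolute_norm :: "(complex ^ 'n \<Rightarrow> real) \<Rightarrow> bool" where
  "is_absolute_norm N \<longleftrightarrow> is_cnorm N \<and>
     (\<forall>a. N a = N (cabs_vec a)) \<and>
     (\<forall>j. N (axis j 1) = 1)"

definition unit_ball :: "(complex ^ 'n \<Rightarrow> real) \<Rightarrow> (complex ^ 'n) set" where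
  "unit_ball N = {x. N x \<le> 1}"

definition ext_pts :: "(complex ^ 'n) set \<Rightarrow> (complex ^ 'n) set" where
  "ext_pts B = {x \<in> B. \<forall>y z. y \<in> B \<and> z \<in> B \<and> y + z = 2 *s x \<longrightarrow> y = x \<and> z = x}"

definition cext_pts :: "(complex ^ 'n \<Rightarrow> real) \<Rightarrow> (complex ^ 'n) set" where
  "cext_pts N = {x \<in> unit_ball N.
     \<forall>y. (\<forall>\<theta>\<in>{0..2*pi}. N (x + cis \<theta> *s y) \<le> 1) \<longrightarrow> y = 0}"

text \<open>Dual space: every complex-linear functional on C^n is x \<mapsto> sum_i w_i x_i
  for a unique w; the dual norm of w is the operator norm of this functional.\<close>
definition pairing :: "complex ^ 'n \<Rightarrow> complex ^ 'n \<Rightarrow> complex" where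
  "pairing w x = (\<Sum>i\<in>UNIV. w $ i * x $ i)"

definition dual_norm :: "(complex ^ 'n \<Rightarrow> real) \<Rightarrow> complex ^ 'n \<Rightarrow> real" where
  "dual_norm N w = Sup {cmod (pairing w x) | x. N x \<le> 1}"

text \<open>CL-space, via the finite-dimensional characterization:
  |x*(x)| = 1 for all extreme points x* of the dual ball and x of the ball.\<close>
definition is_CL_space :: "(complex ^ 'n \<Rightarrow> real) \<Rightarrow> bool" where
  "is_CL_space N \<longleftrightarrow>
     (\<forall>w \<in> ext_pts (unit_ball (dual_norm N)). \<forall>x \<in> ext_pts (unit_ball N).
        cmod (pairing w x) = 1)"

definition nonneg_real_vecs :: "(complex ^ 'n) set" where
  "nonneg_real_vecs = {x. \<forall>i. Im (x $ i) = 0 \<and> 0 \<le> Re (x $ i)}"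

end

theory Submission imports Defs begin

definition dmul :: "complex ^ 'm \<Rightarrow> complex ^ 'm \<Rightarrow> complex ^ 'm" where
  "dmul d x = (\<chi> j. d $ j * x $ j)"

context
  fixes N :: "complex ^ 'n \<Rightarrow> real"
  assumes A: "is_absolute_norm N"
begin

lemma N_scale: "N (c *s x) = cmod c * N x"
  using A unfolding is_absolute_norm_def is_cnorm_def by blast

lemma N_tri: "N (x + y) \<le> N x + N y"
  using A unfolding is_absolute_norm_def is_cnorm_def by blast

lemma N_zero_iff: "N x = 0 \<longleftrightarrow> x = 0"
  using A unfolding is_absolute_norm_def is_cnorm_def by blast

lemma N_abs: "N (cabs_vec x) = N x"
  using A unfolding is_absolute_norm_def by metis

lemma N_axis: "N (axis j 1) = 1"
  using A unfolding is_absolute_norm_def by blast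

lemma N_nonneg: "N x \<ge> 0"
proof -
  have "N (x + (-1) *s x) \<le> N x + N ((-1) *s x)" by (rule N_tri)
  moreover have "x + (-1) *s x = 0" by (simp add: vec_eq_iff)
  moreover have "N 0 = 0" using N_zero_iff by simp
  ultimately show ?thesis using N_scale[of "-1" x] by simp
qed

lemma scaleR_as_smult: "t *\<^sub>R x = complex_of_real t *s (x :: complex ^ 'n)"
  unfolding vec_eq_iff vector_smult_component vector_scaleR_component by (simp add: scaleR_conv_of_real)

lemma N_scaleR: "N (t *\<^sub>R x) = \<bar>t\<bar> * N x"
  by (simp add: scaleR_as_smult N_scale)

lemma N_convex_comb: "0 \<le> u \<Longrightarrow> 0 \<le> v \<Longrightarrow> N (u *\<^sub>R x + v *\<^sub>R y) \<le> u * N x + v * N y"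
  using N_tri[of "u *\<^sub>R x" "v *\<^sub>R y"] by (simp add: N_scaleR)


lemma N_dmul: assumes "\<forall>j. cmod (d $ j) = 1" shows "N (dmul d x) = N x"
proof -
  have "cabs_vec (dmul d x) = cabs_vec x"
    using assms by (simp add: cabs_vec_def dmul_def vec_eq_iff norm_mult)
  thus ?thesis by (metis N_abs)
qed

lemma unimod_split:
  fixes d :: complex assumes "cmod d \<le> 1"
  shows "\<exists>u v. cmod u = 1 \<and> cmod v = 1 \<and> u + v = 2 * d"
proof -
  define e where "e = (if d = 0 then 1 else d / complex_of_real (cmod d))"
  define s where "s = sqrt (1 - (cmod d)^2)"
  have ed: "d = e * complex_of_real (cmod d)" by (simp add: e_def)
  have ce: "cmod e = 1" by (simp add: e_def norm_divide)
  have s2: "s^2 = 1 - (cmod d)^2" unfolding s_def using assms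
    by (simp add: abs_le_square_iff) (smt (verit) norm_ge_zero power_le_one)
  have n1: "cmod (complex_of_real (cmod d) + \<i> * complex_of_real s) = 1"
    "cmod (complex_of_real (cmod d) - \<i> * complex_of_real s) = 1"
    using s2 by (simp_all add: cmod_def)
  show ?thesis
    apply (rule exI[of _ "e * (complex_of_real (cmod d) + \<i> * complex_of_real s)"])
    apply (rule exI[of _ "e * (complex_of_real (cmod d) - \<i> * complex_of_real s)"])
    using n1 ce apply (simp add: norm_mult)
    apply (subst (3) ed) by (simp add: algebra_simps)
qed

lemma N_mono:
  assumes "\<And>j. cmod (x $ j) \<le> cmod (y $ j)"
  shows "N x \<le> N y"
proof -
  define d where "d = (\<chi> j. x $ j / y $ j)"
  have dle: "cmod (d $ j) \<le> 1" for j
    using assms[of j] by (auto simp: d_def norm_divide divide_le_eq)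
  have "x $ j = 0" if "y $ j = 0" for j using assms[of j] that by simp
  hence xd: "x = dmul d y"
    using assms by (auto simp: vec_eq_iff dmul_def d_def)
  obtain u v where uv: "\<And>j. cmod (u j) = 1 \<and> cmod (v j) = 1 \<and> u j + v j = 2 * d $ j"
    using unimod_split[OF dle] by metis
  define U where "U = (\<chi> j. u j)"
  define V where "V = (\<chi> j. v j)"
  have dj: "d$j = (u j + v j)/2" for j using uv[of j] by simp
  have "x = (1/2) *\<^sub>R dmul U y + (1/2) *\<^sub>R dmul V y"
    unfolding xd by (simp add: vec_eq_iff dmul_def U_def V_def scaleR_as_smult dj field_simps)
  hence "N x \<le> (1/2) * N (dmul U y) + (1/2) * N (dmul V y)"
    using N_convex_comb[of "1/2" "1/2"] by simp
  also have "\<dots> = N y" using uv by (simp add: N_dmul U_def V_def)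
  finally show ?thesis .
qed


lemma N_zero: "N 0 = 0" using N_zero_iff by simp

lemma comp_le: "cmod (x $ i) \<le> N x"
proof -
  have "N (x $ i *s axis i 1) \<le> N x"
    by (rule N_mono) (simp add: axis_def)
  thus ?thesis by (simp add: N_scale N_axis)
qed

lemma N_sum: "finite S \<Longrightarrow> N (sum f S) \<le> (\<Sum>i\<in>S. N (f i))"
proof (induction S rule: finite_induct)
  case empty then show ?case by (simp add: N_zero)
next
  case (insert a S)
  then show ?case using N_tri[of "f a" "sum f S"] by simp
qed

lemma vec_axis_sum: "x = (\<Sum>j\<in>UNIV. x $ j *s axis j (1::complex))"
  unfolding vec_eq_iff sum_component vector_smult_component axis_def vec_lambda_beta
  by (simp add: if_distrib[of "\<lambda>t. _ * t"] cong: if_cong)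

lemma N_le_l1: "N x \<le> (\<Sum>j\<in>UNIV. cmod (x $ j))"
proof -
  have "N x = N (\<Sum>j\<in>UNIV. x $ j *s axis j (1::complex))" by (subst vec_axis_sum) simp
  also have "\<dots> \<le> (\<Sum>j\<in>UNIV. N (x $ j *s axis j 1))" by (rule N_sum) simp
  also have "\<dots> = (\<Sum>j\<in>UNIV. cmod (x $ j))" by (simp add: N_scale N_axis)
  finally show ?thesis .
qed

lemma N_le_norm: "N x \<le> real CARD('n) * norm x"
proof -
  have "N x \<le> (\<Sum>j\<in>UNIV. cmod (x $ j))" by (rule N_le_l1)
  also have "\<dots> \<le> (\<Sum>j\<in>(UNIV::'n set). norm x)" by (rule sum_mono) (rule Finite_Cartesian_Product.norm_nth_le)
  finally show ?thesis by simp
qed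

lemma N_continuous: "continuous_on UNIV N"
proof -
  have "(real CARD('n))-lipschitz_on UNIV N"
  proof (rule lipschitz_onI)
    fix x y :: "complex ^ 'n"
    have "N x \<le> N (x - y) + N y" using N_tri[of "x - y" y] by simp
    moreover have "N y \<le> N (y - x) + N x" using N_tri[of "y - x" x] by simp
    moreover have "N (y - x) = N (x - y)" using N_scale[of "-1" "x - y"]
      by (simp add: vec_eq_iff)
    moreover have "N (x - y) \<le> real CARD('n) * norm (x - y)" by (rule N_le_norm)
    ultimately show "dist (N x) (N y) \<le> real CARD('n) * dist x y"
      by (simp add: dist_real_def dist_norm abs_le_iff)
  qed simp
  thus ?thesis by (rule lipschitz_on_continuous_on)
qed

lemma ball_closed: "closed (unit_ball N)"
  unfolding unit_ball_def by (rule closed_Collect_le[OF N_continuous]) simp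

lemma norm_le_l1c: "norm (x :: complex ^ 'n) \<le> (\<Sum>j\<in>UNIV. cmod (x $ j))"
  by (simp add: norm_vec_def L2_set_le_sum)

lemma ball_bounded: "bounded (unit_ball N)"
proof -
  have "norm x \<le> real CARD('n)" if "N x \<le> 1" for x
  proof -
    have "norm x \<le> (\<Sum>j\<in>UNIV. cmod (x $ j))" by (rule norm_le_l1c)
    also have "\<dots> \<le> (\<Sum>j\<in>(UNIV::'n set). 1)"
      by (rule sum_mono) (use comp_le that in \<open>meson order_trans\<close>)
    finally show ?thesis by simp
  qed
  thus ?thesis unfolding bounded_iff unit_ball_def by blast
qed

lemma ball_compact: "compact (unit_ball N)"
  using ball_closed ball_bounded compact_eq_bounded_closed by blast

lemma ball_convex: "convex (unit_ball N)"
  unfolding convex_def unit_ball_def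
proof (clarsimp)
  fix x y :: "complex ^ 'n" and u v :: real
  assume "N x \<le> 1" "N y \<le> 1" "0 \<le> u" "0 \<le> v" "u + v = 1"
  then show "N (u *\<^sub>R x + v *\<^sub>R y) \<le> 1"
    using N_convex_comb[of u v x y] mult_left_mono[of "N x" 1 u] mult_left_mono[of "N y" 1 v]
    by linarith
qed

end

lemma pairing_sum_right:
  "pairing w (\<Sum>p\<in>S. u p *\<^sub>R f p) = (\<Sum>p\<in>S. complex_of_real (u p) * pairing w (f p))"
  unfolding pairing_def sum_component vector_scaleR_component
  by (simp add: sum_distrib_left scaleR_conv_of_real algebra_simps) (rule sum.swap)

lemma pairing_sum_left:
  "pairing (\<Sum>p\<in>S. u p *\<^sub>R f p) x = (\<Sum>p\<in>S. complex_of_real (u p) * pairing (f p) x)"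
  unfolding pairing_def sum_component vector_scaleR_component
  by (simp add: sum_distrib_left sum_distrib_right scaleR_conv_of_real algebra_simps) (rule sum.swap)

lemma pairing_axis: "pairing w (axis j 1) = w $ j" "pairing (axis j 1) w = w $ j"
  by (simp_all add: pairing_def axis_def if_distrib[of "\<lambda>t. _ * t"] if_distrib[of "\<lambda>t. t * _"] cong: if_cong)


lemma dmul_inv:
  assumes "\<forall>j. cmod (d $ j) = 1"
  shows "dmul d (dmul (\<chi> j. cnj (d $ j)) x) = x" "dmul (\<chi> j. cnj (d $ j)) (dmul d x) = x"
proof -
  have "d $ j * cnj (d $ j) = 1" for j
    using assms complex_norm_square[of "d $ j", symmetric] by simp
  thus "dmul d (dmul (\<chi> j. cnj (d $ j)) x) = x" "dmul (\<chi> j. cnj (d $ j)) (dmul d x) = x"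
    by (simp_all add: dmul_def vec_eq_iff mult.assoc[symmetric] mult.commute[of "cnj _"])
qed

lemma unimod_cnj: "\<forall>j. cmod (d $ j) = 1 \<Longrightarrow> \<forall>j. cmod ((\<chi> j. cnj (d $ j)) $ j) = 1"
  by simp

lemma ext_cabs:
  assumes inv: "\<And>d x. \<forall>j. cmod (d $ j) = 1 \<Longrightarrow> x \<in> S \<Longrightarrow> dmul d x \<in> S"
    and w: "w \<in> ext_pts S"
  shows "cabs_vec w \<in> ext_pts S"
proof -
  define d where "d = (\<chi> j. if w $ j = 0 then 1 else cnj (w $ j) / complex_of_real (cmod (w $ j)))"
  have ud: "\<forall>j. cmod (d $ j) = 1" by (simp add: d_def norm_divide)
  have cv: "cabs_vec w = dmul d w"
  proof -
    have "complex_of_real (cmod (w $ j)) = d $ j * w $ j" for j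
    proof (cases "w $ j = 0")
      case False
      have "cnj (w $ j) * w $ j = complex_of_real ((cmod (w $ j))^2)"
        using complex_norm_square[of "w $ j"] by (simp add: mult.commute)
      then show ?thesis using False by (simp add: d_def power2_eq_square field_simps)
    qed (simp add: d_def)
    thus ?thesis by (simp add: cabs_vec_def dmul_def vec_eq_iff)
  qed
  define e where "e = (\<chi> j. cnj (d $ j))"
  have ue: "\<forall>j. cmod (e $ j) = 1" using ud by (simp add: e_def)
  have wS: "w \<in> S" using w by (simp add: ext_pts_def)
  show ?thesis unfolding ext_pts_def
  proof (rule CollectI, rule conjI)
    show "cabs_vec w \<in> S" unfolding cv by (rule inv[OF ud wS])
    show "\<forall>y z. y \<in> S \<and> z \<in> S \<and> y + z = 2 *s cabs_vec w \<longrightarrow> y = cabs_vec w \<and> z = cabs_vec w"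
    proof (intro allI impI)
    fix y z assume h: "y \<in> S \<and> z \<in> S \<and> y + z = 2 *s cabs_vec w"
    have "dmul e y + dmul e z = 2 *s w"
    proof -
      have "dmul e y + dmul e z = dmul e (y + z)" by (simp add: dmul_def vec_eq_iff algebra_simps)
      also have "\<dots> = dmul e (2 *s dmul d w)" using h cv by simp
      also have "\<dots> = 2 *s dmul e (dmul d w)" by (simp add: dmul_def vec_eq_iff algebra_simps)
      also have "\<dots> = 2 *s w" using dmul_inv(2)[OF ud] by (simp add: e_def)
      finally show ?thesis .
    qed
    moreover have "dmul e y \<in> S" "dmul e z \<in> S" using inv[OF ue] h by auto
    ultimately have "dmul e y = w" "dmul e z = w" using w unfolding ext_pts_def by blast+
    hence "y = dmul d w" "z = dmul d w"
      using dmul_inv(1)[OF ud] by (metis e_def)+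
    thus "y = cabs_vec w \<and> z = cabs_vec w" using cv by simp
  qed
  qed
qed

lemma extreme_to_ext:
  assumes "x extreme_point_of S" shows "x \<in> ext_pts S"
  unfolding ext_pts_def
proof (rule CollectI, rule conjI)
  show "x \<in> S" using assms by (simp add: extreme_point_of_def)
  show "\<forall>y z. y \<in> S \<and> z \<in> S \<and> y + z = 2 *s x \<longrightarrow> y = x \<and> z = x"
  proof (intro allI impI)
  fix y z assume h: "y \<in> S \<and> z \<in> S \<and> y + z = 2 *s x"
  have mx: "midpoint y z = x"
    using h unfolding midpoint_def by (simp add: vec_eq_iff)
  have "y = z"
  proof (rule ccontr)
    assume "y \<noteq> z"
    hence "x \<in> open_segment y z" using mx midpoint_in_open_segment by metis
    thus False using assms h by (auto simp: extreme_point_of_def)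
  qed
  thus "y = x \<and> z = x" using mx by (simp add: midpoint_def)
  qed
qed


context
  fixes N :: "complex ^ 'n \<Rightarrow> real"
  assumes A: "is_absolute_norm N"
begin

lemma pair_bound: "cmod (pairing w x) \<le> (\<Sum>j\<in>UNIV. cmod (w $ j)) * N x"
proof -
  have "cmod (pairing w x) \<le> (\<Sum>j\<in>UNIV. cmod (w $ j * x $ j))"
    unfolding pairing_def by (rule norm_sum)
  also have "\<dots> \<le> (\<Sum>j\<in>UNIV. cmod (w $ j) * N x)"
    by (rule sum_mono) (simp add: norm_mult mult_left_mono comp_le[OF A])
  finally show ?thesis by (simp add: sum_distrib_right)
qed

lemma dual_le1_iff:
  "dual_norm N w \<le> 1 \<longleftrightarrow> (\<forall>x. N x \<le> 1 \<longrightarrow> cmod (pairing w x) \<le> 1)"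
proof -
  let ?S = "{cmod (pairing w x) | x. N x \<le> 1}"
  have "cmod (pairing w 0) \<in> ?S" using N_zero[OF A] by force
  hence ne: "?S \<noteq> {}" by blast
  have bd: "bdd_above ?S"
  proof (rule bdd_aboveI)
    fix t assume "t \<in> ?S"
    then obtain x where "t = cmod (pairing w x)" "N x \<le> 1" by blast
    thus "t \<le> (\<Sum>j\<in>UNIV. cmod (w $ j))"
      using pair_bound[of w x] mult_left_mono[of "N x" 1 "\<Sum>j\<in>UNIV. cmod (w $ j)"]
      by (simp add: sum_nonneg)
  qed
  show ?thesis unfolding dual_norm_def using cSup_le_iff[OF ne bd] by blast
qed

lemma dual_ball_eq:
  "unit_ball (dual_norm N) = (\<Inter>x\<in>{x. N x \<le> 1}. {w. cmod (pairing w x) \<le> 1})"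
  unfolding unit_ball_def using dual_le1_iff by blast

lemma dual_closed: "closed (unit_ball (dual_norm N))"
  unfolding dual_ball_eq
proof (rule closed_INT, intro ballI closed_Collect_le)
  fix x :: "complex ^ 'n"
  show "continuous_on UNIV (\<lambda>w. cmod (pairing w x))"
    unfolding pairing_def by (intro continuous_intros)
qed simp

lemma dual_convex: "convex (unit_ball (dual_norm N))"
  unfolding dual_ball_eq
proof (rule convex_INT)
  fix x :: "complex ^ 'n"
  show "convex {w. cmod (pairing w x) \<le> 1}"
    unfolding convex_def
  proof (clarsimp)
    fix w1 w2 :: "complex ^ 'n" and u v :: real
    assume h: "cmod (pairing w1 x) \<le> 1" "cmod (pairing w2 x) \<le> 1" "0 \<le> u" "0 \<le> v" "u + v = 1"
    have "pairing (u *\<^sub>R w1 + v *\<^sub>R w2) x = complex_of_real u * pairing w1 x + complex_of_real v * pairing w2 x"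
      using pairing_sum_left[of "\<lambda>i. if i then u else v" "\<lambda>i. if i then w1 else w2" UNIV x]
      by (simp add: UNIV_bool ac_simps)
    hence "cmod (pairing (u *\<^sub>R w1 + v *\<^sub>R w2) x) \<le> u * cmod (pairing w1 x) + v * cmod (pairing w2 x)"
      using h norm_triangle_ineq[of "complex_of_real u * pairing w1 x" "complex_of_real v * pairing w2 x"]
      by (simp add: norm_mult)
    also have "\<dots> \<le> 1" using h mult_left_mono[of _ 1 u] mult_left_mono[of _ 1 v] by (smt (verit))
    finally show "cmod (pairing (u *\<^sub>R w1 + v *\<^sub>R w2) x) \<le> 1" .
  qed
qed

lemma dual_bounded: "bounded (unit_ball (dual_norm N))"
proof -
  have "norm w \<le> real CARD('n)" if "dual_norm N w \<le> 1" for w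
  proof -
    have c: "cmod (w $ j) \<le> 1" for j
      using that dual_le1_iff N_axis[OF A, of j] pairing_axis(1)[of w j] by (metis order_refl)
    have "norm w \<le> (\<Sum>j\<in>UNIV. cmod (w $ j))" by (rule norm_le_l1c[OF A])
    also have "\<dots> \<le> (\<Sum>j\<in>(UNIV::'n set). 1)" by (rule sum_mono) (rule c)
    finally show ?thesis by simp
  qed
  thus ?thesis unfolding bounded_iff unit_ball_def by blast
qed

lemma dual_compact: "compact (unit_ball (dual_norm N))"
  using dual_closed dual_bounded compact_eq_bounded_closed by blast

lemma axis_in_dual: "axis i 1 \<in> unit_ball (dual_norm N)"
  unfolding unit_ball_def by (simp add: dual_le1_iff pairing_axis(2)) (meson comp_le[OF A] order_trans)

lemma pairing_dmul: "pairing (dmul d w) x = pairing w (dmul d x)"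
  by (simp add: pairing_def dmul_def algebra_simps)

lemma dual_dmul:
  "\<forall>j. cmod (d $ j) = 1 \<Longrightarrow> w \<in> unit_ball (dual_norm N) \<Longrightarrow> dmul d w \<in> unit_ball (dual_norm N)"
  unfolding unit_ball_def using dual_le1_iff pairing_dmul N_dmul[OF A] by (metis mem_Collect_eq)

lemma ball_dmul:
  "\<forall>j. cmod (d $ j) = 1 \<Longrightarrow> w \<in> unit_ball N \<Longrightarrow> dmul d w \<in> unit_ball N"
  unfolding unit_ball_def using N_dmul[OF A] by simp

lemma dual_ext_exists:
  "\<exists>w \<in> ext_pts (unit_ball (dual_norm N)) \<inter> nonneg_real_vecs. Re (w $ i) > 0"
proof -
  let ?K = "unit_ball (dual_norm N)"
  have "axis i 1 \<in> convex hull {w. w extreme_point_of ?K}"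
    using Krein_Milman_Minkowski[OF dual_compact dual_convex] axis_in_dual by blast
  then obtain S u where S: "finite S" "S \<subseteq> {w. w extreme_point_of ?K}" "\<forall>x\<in>S. 0 \<le> u x"
    "sum u S = 1" "(\<Sum>v\<in>S. u v *\<^sub>R v) = axis i 1"
    unfolding convex_hull_explicit by blast
  have "Re ((\<Sum>v\<in>S. u v *\<^sub>R v) $ i) = 1" using S(5) by (simp add: axis_def)
  hence "(\<Sum>v\<in>S. u v * Re (v $ i)) = 1" by (simp add: Re_sum)
  then obtain v where v: "v \<in> S" "Re (v $ i) > 0"
  proof -
    assume r: "\<And>v. v \<in> S \<Longrightarrow> 0 < Re (v $ i) \<Longrightarrow> thesis"
    show thesis
    proof (rule ccontr)
      assume "\<not> thesis"
      hence "\<forall>v\<in>S. Re (v $ i) \<le> 0" using r by force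
      hence "(\<Sum>v\<in>S. u v * Re (v $ i)) \<le> 0"
        using S(3) by (intro sum_nonpos) (simp add: mult_nonneg_nonpos)
      thus False using \<open>(\<Sum>v\<in>S. u v * Re (v $ i)) = 1\<close> by simp
    qed
  qed
  have "v \<in> ext_pts ?K" using v S(2) extreme_to_ext by blast
  hence "cabs_vec v \<in> ext_pts ?K" using ext_cabs dual_dmul by blast
  moreover have "cabs_vec v \<in> nonneg_real_vecs" by (simp add: cabs_vec_def nonneg_real_vecs_def)
  moreover have "Re (cabs_vec v $ i) > 0" using v(2) by (auto simp: cabs_vec_def)
  ultimately show ?thesis by blast
qed

end


lemma unimod_cis: assumes "cmod c = 1" shows "\<exists>\<theta>\<in>{0..2*pi}. cis \<theta> = c"
proof -
  have "is_Arg c (Arg2pi c)" "0 \<le> Arg2pi c" "Arg2pi c < 2*pi" using Arg2pi by auto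
  thus ?thesis using assms by (intro bexI[of _ "Arg2pi c"]) (auto simp: is_Arg_def cis_conv_exp)
qed

lemma Re_pairing: "\<forall>j. Im (w $ j) = 0 \<Longrightarrow> Re (pairing w p) = (\<Sum>j\<in>UNIV. Re (w $ j) * Re (p $ j))"
  by (simp add: pairing_def Re_sum)

lemma Im_pairing: "\<forall>j. Im (w $ j) = 0 \<Longrightarrow> \<forall>j. Im (p $ j) = 0 \<Longrightarrow> Im (pairing w p) = 0"
  by (simp add: pairing_def Im_sum)

lemma phase:
  fixes z :: complex
  obtains e where "cmod e = 1" "z = e * complex_of_real (cmod z)"
proof -
  define e where "e = (if z = 0 then 1 else z / complex_of_real (cmod z))"
  have "cmod e = 1" "z = e * complex_of_real (cmod z)" by (auto simp: e_def norm_divide)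
  thus ?thesis using that by blast
qed

theorem theorem5p1:
  fixes N :: "complex ^ 'n \<Rightarrow> real" and a :: "complex ^ 'n"
  assumes "is_absolute_norm N"
    and "is_CL_space N"
  shows "a \<in> cext_pts N \<longleftrightarrow>
         cabs_vec a \<in> convex hull (nonneg_real_vecs \<inter> ext_pts (unit_ball N))"
proof -
  note A = assms(1)
  let ?B = "unit_ball N"
  let ?K = "unit_ball (dual_norm N)"
  let ?P = "nonneg_real_vecs \<inter> ext_pts ?B"
  have PB: "?P \<subseteq> ?B" by (auto simp: ext_pts_def)
  have hullB: "convex hull ?P \<subseteq> ?B" using PB ball_convex[OF A] by (rule hull_minimal)
  have Na: "N (cabs_vec a) = N a" by (rule N_abs[OF A])
  have cabs_comp: "Re (cabs_vec v $ j) = cmod (v $ j)" "Im (cabs_vec v $ j) = 0" for v :: "complex ^ 'n" and j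
    by (simp_all add: cabs_vec_def)
  show ?thesis
  proof
    assume ca: "a \<in> cext_pts N"
    define x where "x = cabs_vec a"
    have aB: "N a \<le> 1" using ca by (simp add: cext_pts_def unit_ball_def)
    have "x \<in> ?B" using aB Na by (simp add: x_def unit_ball_def)
    hence "x \<in> convex hull {q. q extreme_point_of ?B}"
      using Krein_Milman_Minkowski[OF ball_compact[OF A] ball_convex[OF A]] by blast
    then obtain S u where S: "finite S" "S \<subseteq> {q. q extreme_point_of ?B}" "\<forall>q\<in>S. 0 \<le> u q"
      "sum u S = 1" "(\<Sum>q\<in>S. u q *\<^sub>R q) = x"
      unfolding convex_hull_explicit by blast
    define x' where "x' = (\<Sum>q\<in>S. u q *\<^sub>R cabs_vec q)"
    have qP: "cabs_vec q \<in> ?P" if "q \<in> S" for q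
    proof -
      have "q \<in> ext_pts ?B" using that S(2) extreme_to_ext by blast
      hence "cabs_vec q \<in> ext_pts ?B" using ext_cabs ball_dmul[OF A] by blast
      thus ?thesis by (simp add: cabs_vec_def nonneg_real_vecs_def)
    qed
    have x'P: "x' \<in> convex hull ?P" unfolding x'_def
      using S(3) qP hull_subset[of ?P convex] by (intro convex_sum[OF S(1) convex_convex_hull S(4)]) auto
    hence Nx': "N x' \<le> 1" using hullB by (auto simp: unit_ball_def)
    have x'c: "Re (x' $ j) = (\<Sum>q\<in>S. u q * cmod (q $ j))" "Im (x' $ j) = 0" for j
      by (simp_all add: x'_def Re_sum Im_sum cabs_comp)
    have le: "cmod (a $ j) \<le> Re (x' $ j)" for j
    proof -
      have "cmod (a $ j) = Re (x $ j)" by (simp add: x_def cabs_comp)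
      also have "\<dots> = (\<Sum>q\<in>S. u q * Re (q $ j))" by (simp flip: S(5) add: Re_sum)
      also have "\<dots> \<le> (\<Sum>q\<in>S. u q * cmod (q $ j))"
        by (rule sum_mono) (use S(3) in \<open>simp add: mult_left_mono complex_Re_le_cmod\<close>)
      finally show ?thesis using x'c by simp
    qed
    have "x = x'"
    proof (rule ccontr)
      assume "x \<noteq> x'"
      then obtain i where "x $ i \<noteq> x' $ i" by (auto simp: vec_eq_iff)
      hence "cmod (a $ i) \<noteq> Re (x' $ i)" using x'c by (auto simp: x_def cabs_vec_def complex_eq_iff)
      hence lt: "cmod (a $ i) < Re (x' $ i)" using le[of i] by simp
      define \<delta> where "\<delta> = Re (x' $ i) - cmod (a $ i)"
      obtain e where e: "cmod e = 1" "a $ i = e * complex_of_real (cmod (a $ i))" using phase by blast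
      define y where "y = (complex_of_real \<delta> * e) *s axis i 1"
      have e0: "e \<noteq> 0" using e(1) by auto
      have "y $ i \<noteq> 0" using lt e0 by (simp add: y_def \<delta>_def axis_def)
      hence "y \<noteq> 0" by auto
      moreover have "\<forall>\<theta>\<in>{0..2*pi}. N (a + cis \<theta> *s y) \<le> 1"
      proof
        fix \<theta> :: real
        have "N (a + cis \<theta> *s y) \<le> N x'"
        proof (rule N_mono[OF A])
          fix j
          have x'j: "cmod (x' $ j) = Re (x' $ j)"
            using cmod_eq_Re[OF x'c(2)[of j]] le[of j] norm_ge_zero[of "a $ j"] by linarith
          show "cmod ((a + cis \<theta> *s y) $ j) \<le> cmod (x' $ j)"
          proof (cases "j = i")
            case True
            have "cmod (a $ i + cis \<theta> * y $ i) \<le> cmod (a $ i) + cmod (cis \<theta> * y $ i)"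
              by (rule norm_triangle_ineq)
            also have "cmod (cis \<theta> * y $ i) = \<delta>"
              using lt e by (simp add: y_def axis_def norm_mult \<delta>_def flip: of_real_diff)
            finally show ?thesis using True x'j by (simp add: \<delta>_def)
          next
            case False
            then show ?thesis using x'j le[of j] by (simp add: y_def axis_def)
          qed
        qed
        thus "N (a + cis \<theta> *s y) \<le> 1" using Nx' by simp
      qed
      ultimately show False using ca by (auto simp: cext_pts_def)
    qed
    thus "cabs_vec a \<in> convex hull ?P" using x'P by (simp add: x_def)
  next
    assume hx: "cabs_vec a \<in> convex hull ?P"
    then obtain S u where S: "finite S" "S \<subseteq> ?P" "\<forall>q\<in>S. 0 \<le> u q"
      "sum u S = 1" "(\<Sum>q\<in>S. u q *\<^sub>R q) = cabs_vec a"
      unfolding convex_hull_explicit by blast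
    have aB: "N a \<le> 1" using hx hullB Na by (auto simp: unit_ball_def)
    have key: "Re (pairing w (cabs_vec a)) = 1" if w: "w \<in> ext_pts ?K" "w \<in> nonneg_real_vecs" for w
    proof -
      have wIm: "\<forall>j. Im (w $ j) = 0" using w(2) by (simp add: nonneg_real_vecs_def)
      have p1: "Re (pairing w p) = 1" if p: "p \<in> S" for p
      proof -
        have pP: "p \<in> ?P" using p S(2) by blast
        have "cmod (pairing w p) = 1" using assms(2) w(1) pP unfolding is_CL_space_def by blast
        moreover have "Im (pairing w p) = 0"
          using Im_pairing[OF wIm] pP by (simp add: nonneg_real_vecs_def)
        moreover have "Re (pairing w p) \<ge> 0" using Re_pairing[OF wIm, of p] w(2) pP
          by (auto simp: nonneg_real_vecs_def intro!: sum_nonneg)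
        ultimately show ?thesis by (simp add: cmod_def)
      qed
      have "Re (pairing w (cabs_vec a)) = (\<Sum>p\<in>S. u p * Re (pairing w p))"
        by (simp flip: S(5) add: pairing_sum_right Re_sum)
      also have "\<dots> = 1" using p1 S(4) by simp
      finally show ?thesis .
    qed
    show "a \<in> cext_pts N" unfolding cext_pts_def
    proof (rule CollectI, rule conjI)
      show "a \<in> ?B" using aB by (simp add: unit_ball_def)
      show "\<forall>y. (\<forall>\<theta>\<in>{0..2 * pi}. N (a + cis \<theta> *s y) \<le> 1) \<longrightarrow> y = 0"
      proof (intro allI impI)
        fix y assume hy: "\<forall>\<theta>\<in>{0..2 * pi}. N (a + cis \<theta> *s y) \<le> 1"
        have circ: "N (a + c *s y) \<le> 1" if "cmod c = 1" for c
          using unimod_cis[OF that] hy by blast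
        show "y = 0"
        proof (rule ccontr)
          assume "y \<noteq> 0"
          then obtain i where bi: "y $ i \<noteq> 0" by (auto simp: vec_eq_iff)
          define b where "b = y $ i"
          obtain e where e: "cmod e = 1" "a $ i = e * complex_of_real (cmod (a $ i))" using phase by blast
          define c where "c = \<i> * e * cnj b / complex_of_real (cmod b)"
          have bn: "b \<noteq> 0" using bi by (simp add: b_def)
          have cn: "cmod c = 1" using e bn by (simp add: c_def norm_mult norm_divide)
          have cb: "c * b = e * (\<i> * complex_of_real (cmod b))"
          proof -
            have "cnj b * b = complex_of_real ((cmod b)^2)"
              using complex_norm_square[of b] by (simp add: mult.commute)
            thus ?thesis using bn by (simp add: c_def power2_eq_square field_simps)
          qed
          define u1 where "u1 = a + c *s y"
          define u2 where "u2 = a + (-c) *s y"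
          have Nu1: "N u1 \<le> 1" using circ[OF cn] by (simp add: u1_def)
          have Nu2: "N u2 \<le> 1" using circ[of "-c"] cn by (simp add: u2_def)
          define z where "z = (1/2) *\<^sub>R cabs_vec u1 + (1/2) *\<^sub>R cabs_vec u2"
          have Nz: "N z \<le> 1"
          proof -
            have "N z \<le> 1/2 * N (cabs_vec u1) + 1/2 * N (cabs_vec u2)"
              unfolding z_def by (rule N_convex_comb[OF A]) simp_all
            thus ?thesis using Nu1 Nu2 by (simp add: N_abs[OF A])
          qed
          have zRe: "Re (z $ j) = (cmod (u1 $ j) + cmod (u2 $ j)) / 2" for j
            by (simp add: z_def cabs_comp)
          have zge: "cmod (a $ j) \<le> Re (z $ j)" for j
          proof -
            have "2 * a $ j = u1 $ j + u2 $ j" by (simp add: u1_def u2_def)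
            hence "2 * cmod (a $ j) \<le> cmod (u1 $ j) + cmod (u2 $ j)"
              using norm_triangle_ineq[of "u1 $ j" "u2 $ j"] by (metis norm_mult norm_numeral)
            thus ?thesis using zRe[of j] by simp
          qed
          have zgt: "cmod (a $ i) < Re (z $ i)"
          proof -
            have m: "cmod (complex_of_real s + \<i> * complex_of_real t) = sqrt (s^2 + t^2)"
              "cmod (complex_of_real s - \<i> * complex_of_real t) = sqrt (s^2 + t^2)" for s t
              by (simp_all add: cmod_def)
            have "u1 $ i = e * (complex_of_real (cmod (a $ i)) + \<i> * complex_of_real (cmod b))"
              using cb e(2) by (simp add: u1_def b_def[symmetric] algebra_simps)
            hence 1: "cmod (u1 $ i) = sqrt ((cmod (a $ i))^2 + (cmod b)^2)"
              using e(1) m(1) by (simp add: norm_mult)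
            have "u2 $ i = e * (complex_of_real (cmod (a $ i)) - \<i> * complex_of_real (cmod b))"
              using cb e(2) by (simp add: u2_def b_def[symmetric] algebra_simps)
            hence 2: "cmod (u2 $ i) = sqrt ((cmod (a $ i))^2 + (cmod b)^2)"
              using e(1) m(2) by (simp add: norm_mult)
            have "cmod (a $ i) < sqrt ((cmod (a $ i))^2 + (cmod b)^2)"
              using bn by (intro real_less_rsqrt) simp
            thus ?thesis using zRe[of i] 1 2 by simp
          qed
          obtain w where w: "w \<in> ext_pts ?K" "w \<in> nonneg_real_vecs" "Re (w $ i) > 0"
            using dual_ext_exists[OF A, of i] by blast
          have wIm: "\<forall>j. Im (w $ j) = 0" and wRe: "\<forall>j. Re (w $ j) \<ge> 0"
            using w(2) by (simp_all add: nonneg_real_vecs_def)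
          have "Re (pairing w z) - Re (pairing w (cabs_vec a))
              = (\<Sum>j\<in>UNIV. Re (w $ j) * (Re (z $ j) - cmod (a $ j)))"
            by (simp add: Re_pairing[OF wIm] cabs_comp sum_subtractf right_diff_distrib)
          also have "\<dots> \<ge> Re (w $ i) * (Re (z $ i) - cmod (a $ i))"
            by (rule member_le_sum) (use wRe zge in \<open>auto intro: mult_nonneg_nonneg\<close>)
          finally have "Re (pairing w z) > 1"
            using key[OF w(1) w(2)] w(3) zgt by (smt (verit) mult_pos_pos)
          moreover have "cmod (pairing w z) \<le> 1"
            using w(1) Nz dual_le1_iff[OF A] by (auto simp: ext_pts_def unit_ball_def)
          ultimately show False using complex_Re_le_cmod[of "pairing w z"] by simp
        qed
      qed
    qed
  qed
qed

end
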